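(* Let $k \ge 1$. If $M$ is a simple matroid and $X \subseteq E(M)$, then every $k$-pseudoclaw of $M / X$ is a $k$-claw of $M$.
   Context: A claw of a matroid $N$ is a set that is both a flat and an independent set of $N$; a $k$-claw is a claw of size $k$. A simplification of a matroid $N$ is any matroid obtained from $N$ by deleting all loops and all but one element from each parallel class. A set $F$ is a $k$-pseudoclaw of $N$ if $F$ is a $k$-claw of some simplification of $N$. *)

theory Defs
  imports Main
begin

definition matroid :: "'a set \<Rightarrow> ('a set \<Rightarrow> bool) \<Rightarrow> bool" where
  "matroid E indep \<longleftrightarrow> finite E \<and> indep {} \<and> (\<forall>I. indep I \<longrightarrow> I \<subseteq> E)
     \<and> (\<forall>I J. indep J \<and> I \<subseteq> J \<longrightarrow> indep I)
     \<and> (\<forall>I J. indep I \<and> indep J \<and> card I < card J \<longrightarrow> (\<exists>e\<in>J - I. indep (insert e I)))"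

definition rank :: "('a set \<Rightarrow> bool) \<Rightarrow> 'a set \<Rightarrow> nat" where
  "rank indep A = Max {card I | I. I \<subseteq> A \<and> indep I}"

definition closure :: "'a set \<Rightarrow> ('a set \<Rightarrow> bool) \<Rightarrow> 'a set \<Rightarrow> 'a set" where
  "closure E indep A = {e \<in> E. rank indep (insert e A) = rank indep A}"

definition flat :: "'a set \<Rightarrow> ('a set \<Rightarrow> bool) \<Rightarrow> 'a set \<Rightarrow> bool" where
  "flat E indep F \<longleftrightarrow> F \<subseteq> E \<and> closure E indep F = F"

definition claw :: "'a set \<Rightarrow> ('a set \<Rightarrow> bool) \<Rightarrow> nat \<Rightarrow> 'a set \<Rightarrow> bool" where
  "claw E indep k F \<longleftrightarrow> indep F \<and> flat E indep F \<and> card F = k"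

definition contract_ground :: "'a set \<Rightarrow> 'a set \<Rightarrow> 'a set" where
  "contract_ground E X = E - X"

definition contract_indep :: "'a set \<Rightarrow> ('a set \<Rightarrow> bool) \<Rightarrow> 'a set \<Rightarrow> 'a set \<Rightarrow> bool" where
  "contract_indep E indep X I \<longleftrightarrow>
     I \<subseteq> E - X \<and> rank indep (I \<union> X) = card I + rank indep X"

definition restrict_indep :: "('a set \<Rightarrow> bool) \<Rightarrow> 'a set \<Rightarrow> 'a set \<Rightarrow> bool" where
  "restrict_indep indep S I \<longleftrightarrow> indep I \<and> I \<subseteq> S"

definition is_loop :: "'a set \<Rightarrow> ('a set \<Rightarrow> bool) \<Rightarrow> 'a \<Rightarrow> bool" where
  "is_loop E indep e \<longleftrightarrow> e \<in> E \<and> \<not> indep {e}"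

definition parallel :: "'a set \<Rightarrow> ('a set \<Rightarrow> bool) \<Rightarrow> 'a \<Rightarrow> 'a \<Rightarrow> bool" where
  "parallel E indep e f \<longleftrightarrow> e \<in> E \<and> f \<in> E \<and> e \<noteq> f \<and> indep {e} \<and> indep {f} \<and> \<not> indep {e, f}"

definition simple :: "'a set \<Rightarrow> ('a set \<Rightarrow> bool) \<Rightarrow> bool" where
  "simple E indep \<longleftrightarrow> (\<forall>e\<in>E. \<not> is_loop E indep e) \<and> (\<forall>e f. \<not> parallel E indep e f)"

definition simplification_set :: "'a set \<Rightarrow> ('a set \<Rightarrow> bool) \<Rightarrow> 'a set \<Rightarrow> bool" where
  "simplification_set E indep S \<longleftrightarrow> S \<subseteq> E \<and> (\<forall>s\<in>S. \<not> is_loop E indep s)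
     \<and> (\<forall>e\<in>E. \<not> is_loop E indep e \<longrightarrow> (\<exists>!s. s \<in> S \<and> (s = e \<or> parallel E indep e s)))"

definition pseudoclaw :: "'a set \<Rightarrow> ('a set \<Rightarrow> bool) \<Rightarrow> nat \<Rightarrow> 'a set \<Rightarrow> bool" where
  "pseudoclaw E indep k F \<longleftrightarrow>
     (\<exists>S. simplification_set E indep S \<and> claw S (restrict_indep indep S) k F)"

end

theory Submission
  imports Defs
begin

lemma rank_ge:
  assumes "finite A" "I \<subseteq> A" "P I"
  shows "card I \<le> rank P A"
proof -
  have "finite {card I | I. I \<subseteq> A \<and> P I}"
    using assms(1) by (simp add: finite_image_set)
  then show ?thesis unfolding rank_def using assms by (intro Max_ge) auto
qed

lemma rank_obtain:
  assumes "finite A" "P {}"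
  shows "\<exists>I. I \<subseteq> A \<and> P I \<and> card I = rank P A"
proof -
  have f: "finite {card I | I. I \<subseteq> A \<and> P I}"
    using assms(1) by (simp add: finite_image_set)
  have "{card I | I. I \<subseteq> A \<and> P I} \<noteq> {}" using assms by auto
  from Max_in[OF f this] show ?thesis unfolding rank_def by auto
qed

lemma rank_le_card:
  assumes "finite A" "P {}"
  shows "rank P A \<le> card A"
proof -
  obtain I where "I \<subseteq> A" "card I = rank P A" using rank_obtain[of A P] assms by blast
  thus ?thesis using assms(1) card_mono by metis
qed

lemma rank_indep_eq:
  assumes "finite I" "P I" "P {}"
  shows "rank P I = card I"
  using rank_le_card[of I P] rank_ge[of I I P] assms by simp

lemma rank_notindep:
  assumes "finite F" "P F" "P {}" "s \<notin> F" "\<not> P (insert s F)"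
  shows "rank P (insert s F) = card F"
proof -
  have "card F \<le> rank P (insert s F)" using rank_ge[of "insert s F" F P] assms by auto
  moreover obtain I where I: "I \<subseteq> insert s F" "P I" "card I = rank P (insert s F)"
    using rank_obtain[of "insert s F" P] assms by auto
  have "card I \<le> card F"
  proof (rule ccontr)
    assume "\<not> ?thesis"
    hence "card I \<ge> card (insert s F)" using assms by auto
    hence "I = insert s F" using I assms by (metis card_seteq finite_insert)
    thus False using I assms by auto
  qed
  ultimately show ?thesis using I by auto
qed

context
  fixes E :: "'a set" and indep :: "'a set \<Rightarrow> bool"
  assumes M: "matroid E indep"
begin

lemma m_empty: "indep {}" using M unfolding matroid_def by auto
lemma m_sub: "indep I \<Longrightarrow> I \<subseteq> E" using M unfolding matroid_def by auto
lemma m_fin: "finite E" using M unfolding matroid_def by auto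
lemma m_her: "indep J \<Longrightarrow> I \<subseteq> J \<Longrightarrow> indep I" using M unfolding matroid_def by blast
lemma m_aug: "indep I \<Longrightarrow> indep J \<Longrightarrow> card I < card J \<Longrightarrow> \<exists>e\<in>J - I. indep (insert e I)"
  using M unfolding matroid_def by auto

lemma m_indep_fin: "indep I \<Longrightarrow> finite I"
  using m_sub m_fin finite_subset by blast

lemma m_r_le: "finite A \<Longrightarrow> rank indep A \<le> card A"
  using rank_le_card[of A indep] m_empty by blast

lemma m_r_indep: "indep I \<Longrightarrow> rank indep I = card I"
  using rank_indep_eq m_indep_fin m_empty by blast

lemma m_indep_of_r:
  assumes "finite A" "card A \<le> rank indep A" shows "indep A"
proof -
  obtain I where I: "I \<subseteq> A" "indep I" "card I = rank indep A"
    using rank_obtain[of A indep, OF assms(1) m_empty] by auto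
  hence "I = A" using assms by (metis card_seteq)
  thus ?thesis using I by simp
qed

lemma m_mono:
  assumes "finite B" "A \<subseteq> B" shows "rank indep A \<le> rank indep B"
proof -
  have fA: "finite A" using assms finite_subset by blast
  obtain I where I: "I \<subseteq> A" "indep I" "card I = rank indep A"
    using rank_obtain[of A indep, OF fA m_empty] by auto
  thus ?thesis using rank_ge[of B I indep] assms by auto
qed

lemma m_extend:
  assumes "finite A"
  shows "indep I \<Longrightarrow> I \<subseteq> A \<Longrightarrow> \<exists>J. I \<subseteq> J \<and> J \<subseteq> A \<and> indep J \<and> card J = rank indep A"
proof (induction "rank indep A - card I" arbitrary: I rule: less_induct)
  case less
  have le: "card I \<le> rank indep A" using rank_ge[of A I indep, OF assms less(3) less(2)] .
  show ?case
  proof (cases "card I = rank indep A")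
    case True then show ?thesis using less by auto
  next
    case False
    obtain J0 where J0: "J0 \<subseteq> A" "indep J0" "card J0 = rank indep A"
      using rank_obtain[of A indep, OF assms m_empty] by auto
    then obtain e where e: "e \<in> J0 - I" "indep (insert e I)"
      using m_aug[OF less(2) J0(2)] False le by auto
    have fI: "finite I" using less(2) m_indep_fin by blast
    have c: "card (insert e I) = Suc (card I)" using e fI by auto
    have "rank indep A - card (insert e I) < rank indep A - card I"
      using c False le by auto
    from less(1)[OF this e(2)] e J0 less(3)
    obtain J where "insert e I \<subseteq> J \<and> J \<subseteq> A \<and> indep J \<and> card J = rank indep A" by auto
    thus ?thesis by auto
  qed
qed

lemma m_submod:
  assumes "finite A" "finite B"
  shows "rank indep (A \<union> B) + rank indep (A \<inter> B) \<le> rank indep A + rank indep B"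
proof -
  obtain I where I: "I \<subseteq> A \<inter> B" "indep I" "card I = rank indep (A \<inter> B)"
    using rank_obtain[of "A \<inter> B" indep, OF _ m_empty] assms by auto
  obtain J where J: "I \<subseteq> J" "J \<subseteq> A \<union> B" "indep J" "card J = rank indep (A \<union> B)"
    using m_extend[of "A \<union> B" I] I assms by auto
  have fJ: "finite J" using J m_indep_fin by blast
  have a: "card (J \<inter> A) \<le> rank indep A"
    using rank_ge[of A "J \<inter> A" indep] m_her[OF J(3)] assms by auto
  have b: "card (J \<inter> B) \<le> rank indep B"
    using rank_ge[of B "J \<inter> B" indep] m_her[OF J(3)] assms by auto
  have c: "card (J \<inter> A \<inter> B) \<le> card I"
    using rank_ge[of "A \<inter> B" "J \<inter> A \<inter> B" indep] m_her[OF J(3), of "J \<inter> A \<inter> B"] assms I by auto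
  have "J \<inter> A \<union> J \<inter> B = J" using J by auto
  moreover have "card (J \<inter> A \<union> J \<inter> B) + card (J \<inter> A \<inter> (J \<inter> B)) = card (J \<inter> A) + card (J \<inter> B)"
    using card_Un_Int[of "J \<inter> A" "J \<inter> B"] fJ by auto
  moreover have "J \<inter> A \<inter> (J \<inter> B) = J \<inter> A \<inter> B" by auto
  moreover have cI: "card I \<le> card (J \<inter> A \<inter> B)"
    using I J fJ by (intro card_mono) auto
  ultimately have "card J + card (J \<inter> A \<inter> B) = card (J \<inter> A) + card (J \<inter> B)"
    by simp
  then show ?thesis using a b c cI I J by linarith
qed

lemma m_insert_le:
  assumes "finite A" shows "rank indep (insert e A) \<le> rank indep A + 1"
proof -
  have "rank indep (A \<union> {e}) + rank indep (A \<inter> {e}) \<le> rank indep A + rank indep {e}"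
    using m_submod assms by blast
  moreover have "rank indep {e} \<le> 1" using m_r_le[of "{e}"] by simp
  ultimately show ?thesis by simp
qed

lemma m_union_le:
  assumes "finite A" "finite B" shows "rank indep (A \<union> B) \<le> rank indep A + rank indep B"
  using m_submod[OF assms] by linarith

end

theorem lemma2p1:
  fixes E X F :: "'a set" and indep :: "'a set \<Rightarrow> bool" and k :: nat
  assumes "k \<ge> 1"
    and "matroid E indep"
    and "simple E indep"
    and "X \<subseteq> E"
    and "pseudoclaw (contract_ground E X) (contract_indep E indep X) k F"
  shows "claw E indep k F"
proof -
  note M = assms(2)
  define r where "r = rank indep"
  define P where "P = contract_indep E indep X"
  obtain S where S: "simplification_set (E - X) P S"
    and cl: "claw S (restrict_indep P S) k F"
    using assms(5) unfolding pseudoclaw_def contract_ground_def P_def by auto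
  have SE: "S \<subseteq> E - X" using S unfolding simplification_set_def by auto
  have FS: "F \<subseteq> S" and PF: "P F" and ck: "card F = k"
    and clo: "closure S (restrict_indep P S) F = F"
    using cl unfolding claw_def restrict_indep_def flat_def by auto
  have fE: "finite E" using m_fin[OF M] .
  have FE: "F \<subseteq> E - X" using FS SE by auto
  have fF: "finite F" using FE fE finite_subset by blast
  have fX: "finite X" using assms(4) fE finite_subset by blast
  have rFX: "r (F \<union> X) = card F + r X" using PF unfolding P_def contract_indep_def r_def by auto
  have "r (F \<union> X) \<le> r F + r X" unfolding r_def using m_union_le[OF M fF fX] .
  hence "card F \<le> r F" using rFX by simp
  hence indF: "indep F" using m_indep_of_r[OF M fF] unfolding r_def by simp
  hence rF: "r F = card F" using m_r_indep[OF M] unfolding r_def by simp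
  have simp1: "\<And>e. e \<in> E \<Longrightarrow> indep {e}"
    using assms(3) unfolding simple_def is_loop_def by auto
  have simp2: "\<And>e f. e \<in> E \<Longrightarrow> f \<in> E \<Longrightarrow> e \<noteq> f \<Longrightarrow> indep {e, f}"
    using assms(3) simp1 unfolding simple_def parallel_def by blast
  have PS: "\<And>A. A \<subseteq> S \<Longrightarrow> rank (restrict_indep P S) A = rank P A"
    unfolding rank_def restrict_indep_def by (metis (no_types, lifting) order_trans)
  have P0: "P {}" unfolding P_def contract_indep_def by simp
  have keyS: "\<And>s. s \<in> S \<Longrightarrow> s \<notin> F \<Longrightarrow> P (insert s F)"
  proof (rule ccontr)
    fix s assume s: "s \<in> S" "s \<notin> F" "\<not> P (insert s F)"
    have "rank P (insert s F) = card F" using rank_notindep[OF fF PF P0 s(2) s(3)] .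
    moreover have "rank P F = card F" using rank_indep_eq[OF fF PF P0] .
    ultimately have "rank (restrict_indep P S) (insert s F) = rank (restrict_indep P S) F"
      using PS FS s by auto
    hence "s \<in> closure S (restrict_indep P S) F" using s unfolding closure_def by auto
    thus False using clo s by auto
  qed
  have flat: "closure E indep F = F"
  proof
    show "F \<subseteq> closure E indep F" using FE unfolding closure_def by (auto simp: insert_absorb)
  next
    show "closure E indep F \<subseteq> F"
    proof
      fix e assume "e \<in> closure E indep F"
      hence eE: "e \<in> E" and re: "r (insert e F) = card F"
        unfolding closure_def r_def using rF r_def by auto
      show "e \<in> F"
      proof (rule ccontr)
        assume eF: "e \<notin> F"
        have re1: "r {e} = 1" using m_r_indep[OF M simp1[OF eE]] unfolding r_def by simp
        have eX: "r (insert e X) = r X + 1"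
        proof -
          have le: "r (insert e X) \<le> r X + 1" using m_insert_le[OF M fX] unfolding r_def by simp
          have ge: "r X \<le> r (insert e X)" unfolding r_def by (rule m_mono[OF M]) (use fX in auto)
          have "r (insert e X) \<noteq> r X"
          proof
            assume h: "r (insert e X) = r X"
            let ?A = "insert e F" and ?B = "insert e X"
            have sm: "r (?A \<union> ?B) + r (?A \<inter> ?B) \<le> r ?A + r ?B"
              using m_submod[OF M, of ?A ?B] fF fX unfolding r_def by simp
            have "e \<in> ?A \<inter> ?B" by simp
            hence "r {e} \<le> r (?A \<inter> ?B)" using m_mono[OF M, of "?A \<inter> ?B" "{e}"] fF
              unfolding r_def by auto
            moreover have "r (F \<union> X) \<le> r (?A \<union> ?B)" unfolding r_def by (rule m_mono[OF M]) (use fF fX in auto)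
            ultimately show False using sm re1 rFX h re by linarith
          qed
          thus ?thesis using le ge by linarith
        qed
        have eNX: "e \<notin> X" using eX by (metis insert_absorb n_not_Suc_n Suc_eq_plus1)
        have Pe: "P {e}" unfolding P_def contract_indep_def using eE eNX eX r_def by auto
        have "\<not> is_loop (E - X) P e" using Pe unfolding is_loop_def by auto
        then obtain s where s: "s \<in> S" "s = e \<or> parallel (E - X) P e s"
          using S eE eNX unfolding simplification_set_def by blast
        show False
        proof (cases "s = e")
          case True
          have "P (insert e F)" using keyS s True eF by auto
          hence "r (insert e F \<union> X) = card F + 1 + r X"
            unfolding P_def contract_indep_def r_def using fF eF by auto
          moreover have "r (insert e F \<union> X) \<le> r (insert e F) + r X"
            using m_union_le[OF M, of "insert e F" X] fF fX unfolding r_def by simp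
          ultimately show False using re by linarith
        next
          case False
          hence par: "parallel (E - X) P e s" using s by auto
          hence sE: "s \<in> E - X" and es: "e \<noteq> s" and Ps: "P {s}" and nP: "\<not> P {e, s}"
            unfolding parallel_def by auto
          have rs: "r (insert s X) = 1 + r X"
            using Ps unfolding P_def contract_indep_def r_def by auto
          have c2: "card {e, s} = 2" using es by simp
          have sub: "{e, s} \<subseteq> E - X" using sE eE eNX by blast
          have res: "r ({e, s} \<union> X) \<noteq> 2 + r X"
          proof
            assume h: "r ({e, s} \<union> X) = 2 + r X"
            have "P {e, s}" unfolding P_def contract_indep_def
              using sub h c2 unfolding r_def by simp
            with nP show False by blast
          qed
          have res2: "r ({e, s} \<union> X) \<le> r X + 1"
          proof -
            have eq: "{e, s} \<union> X = insert s ({e} \<union> X)" by blast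
            have "rank indep (insert s ({e} \<union> X)) \<le> rank indep ({e} \<union> X) + 1"
              using m_insert_le[OF M, of "{e} \<union> X" s] fX by simp
            hence "r ({e, s} \<union> X) \<le> r ({e} \<union> X) + 1"
              unfolding r_def eq .
            moreover have "r ({e, s} \<union> X) \<noteq> r ({e} \<union> X) + 1" using res eX by simp
            moreover have "r ({e} \<union> X) \<le> r ({e, s} \<union> X)"
              unfolding r_def by (rule m_mono[OF M]) (use fX in auto)
            ultimately show ?thesis using eX by simp
          qed
          show False
          proof (cases "s \<in> F")
            case True
            let ?A = "insert e F" and ?B = "insert e (insert s X)"
            have sm: "r (?A \<union> ?B) + r (?A \<inter> ?B) \<le> r ?A + r ?B"
              using m_submod[OF M, of ?A ?B] fF fX unfolding r_def by simp
            have i: "?A \<inter> ?B = {e, s}" using True FE by auto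
            have sE': "s \<in> E" using sE by auto
            have r2: "r {e, s} = 2" using m_r_indep[OF M simp2[OF eE sE' es]] es
              unfolding r_def by simp
            have ri: "r (?A \<inter> ?B) = 2" using i r2 by simp
            have ru: "r (F \<union> X) \<le> r (?A \<union> ?B)" unfolding r_def by (rule m_mono[OF M]) (use fF fX in auto)
            have "?B = {e, s} \<union> X" by auto
            hence rb: "r ?B \<le> r X + 1" using res2 by simp
            from sm ri ru rb rFX re show False by linarith
          next
            case sF: False
            let ?T = "{e, s} \<union> X" and ?U = "insert e F \<union> X"
            have sm: "r (?T \<union> ?U) + r (?T \<inter> ?U) \<le> r ?T + r ?U"
              using m_submod[OF M, of ?T ?U] fF fX unfolding r_def by simp
            have "r (insert e X) \<le> r (?T \<inter> ?U)"
              unfolding r_def by (rule m_mono[OF M]) (use fF fX in auto)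
            moreover have "r ?U \<le> card F + r X"
              using m_union_le[OF M, of "insert e F" X] fF fX re unfolding r_def by simp
            moreover have "r (insert s F \<union> X) \<le> r (?T \<union> ?U)"
              unfolding r_def by (rule m_mono[OF M]) (use fF fX in auto)
            ultimately have "r (insert s F \<union> X) \<le> card F + r X"
              using sm res2 eX by linarith
            moreover have "P (insert s F)" using keyS s sF by auto
            hence "r (insert s F \<union> X) = card F + 1 + r X"
              unfolding P_def contract_indep_def r_def using fF sF by auto
            ultimately show False by linarith
          qed
        qed
      qed
    qed
  qed
  show ?thesis unfolding claw_def flat_def using indF flat FE ck by auto
qed

end
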